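(* Under the assumptions of the locally linear uniform convergence theorem (namely (C1)–(C5), $S$ compact satisfying (CS), and bandwidth $h\to0$ with $1/(T^rh^{d+r})=o(1)$, $r=\min\{\rho,1\}$, and $Th^{d+1}\to\infty$), $$\sup_{u\in[0,1],x\in S}\Big\|\mathbb{E}\Big[\tfrac1T\mathbf D^\top\mathbf W(\mathbf m-\mathbf D\,\mathfrak m(u,x))\Big]\Big\|_2=O\Big(\tfrac{1}{T^rh^{d-1}}+h^2\Big).$$
   Context: Model $Y_{t,T}=m(t/T,X_{t,T})+\varepsilon_{t,T}$, $X_{t,T}\in\mathbb{R}^d$. (C1) local stationarity: for each $u\in[0,1]$ there is a strictly stationary $\{X_t(u)\}$ with $\|X_{t,T}-X_t(u)\|\le(|t/T-u|+1/T)U_{t,T}(u)$ a.s., $\mathbb{E}[U_{t,T}(u)^\rho]\le C_U$, $\rho>0$. (C2) the density $f(u,x)$ of $X_t(u)$ has continuous partial derivatives in $u$ and $x$. (C3) strong mixing with $\alpha(k)\le Ak^{-\beta}$. (C4) $m$ twice continuously differentiable in $(u,x)$. (C5) $K$ nonnegative, symmetric, bounded, Lipschitz, $K(v)=0$ for $|v|>C_1$, $K_h(v)=h^{-1}K(v/h)$. (CS): $\inf_{x\in S}\liminf_{h\downarrow0}h^{-d}\mathrm{Leb}(S\cap(x+(-C_1h,C_1h)^d))\ge c_S>0$. $\mathbf D$ is the $T\times(d+2)$ matrix with rows $(1,(t/T-u)/h,(X^1_{t,T}-x^1)/h,\dots,(X^d_{t,T}-x^d)/h)$; $\mathbf W=\mathrm{diag}(K_h(u-t/T)\prod_jK_h(x^j-X^j_{t,T}))_{t=1}^T$;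 $\mathbf m=(m(1/T,X_{1,T}),\dots,m(T/T,X_{T,T}))^\top$; $\mathfrak m(u,x)=(m(u,x),h\partial_um(u,x),h\partial_{x^1}m(u,x),\dots,h\partial_{x^d}m(u,x))^\top$. *)

theory Defs
  imports "HOL-Probability.Probability"
begin

definition strictly_stationary ::
  "'a measure \<Rightarrow> (int \<Rightarrow> 'a \<Rightarrow> 'b::topological_space) \<Rightarrow> bool" where
  "strictly_stationary M Z \<longleftrightarrow>
     (\<forall>t. Z t \<in> borel_measurable M) \<and>
     (\<forall>(k::int) (n::nat).
        distr M (PiM {..n} (\<lambda>_. borel)) (\<lambda>\<omega>. \<lambda>i\<in>{..n}. Z (k + int i) \<omega>)
      = distr M (PiM {..n} (\<lambda>_. borel)) (\<lambda>\<omega>. \<lambda>i\<in>{..n}. Z (int i) \<omega>))"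

definition array_sigma ::
  "'a measure \<Rightarrow> (nat \<Rightarrow> nat \<Rightarrow> 'a \<Rightarrow> 'b::topological_space) \<Rightarrow> nat \<Rightarrow> nat set \<Rightarrow> 'a set set" where
  "array_sigma M Z T I =
     sigma_sets (space M) (\<Union>s\<in>I. {Z T s -` B \<inter> space M | B. B \<in> sets borel})"

definition alpha_mixing ::
  "'a measure \<Rightarrow> (nat \<Rightarrow> nat \<Rightarrow> 'a \<Rightarrow> 'b::topological_space) \<Rightarrow> nat \<Rightarrow> real" where
  "alpha_mixing M Z k =
     Sup {\<bar>measure M (A \<inter> B) - measure M A * measure M B\<bar> | T t A B.
            A \<in> array_sigma M Z T {1..t} \<and> B \<in> array_sigma M Z T {t+k..T}}"

definition Kh :: "(real \<Rightarrow> real) \<Rightarrow> real \<Rightarrow> real \<Rightarrow> real" where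
  "Kh K h v = K (v / h) / h"

text \<open>Row t of the design matrix D, as an element of R x R x R^d (Euclidean norm).\<close>
definition design_row ::
  "(nat \<Rightarrow> nat \<Rightarrow> 'a \<Rightarrow> (real^'d)) \<Rightarrow> nat \<Rightarrow> real \<Rightarrow> real \<Rightarrow> (real^'d) \<Rightarrow> nat \<Rightarrow> 'a
     \<Rightarrow> real \<times> real \<times> (real^'d)" where
  "design_row X T h u x t \<omega> = (1, (real t / real T - u) / h, (1 / h) *\<^sub>R (X T t \<omega> - x))"

text \<open>Diagonal entry t of the weight matrix W.\<close>
definition weight ::
  "(real \<Rightarrow> real) \<Rightarrow> (nat \<Rightarrow> nat \<Rightarrow> 'a \<Rightarrow> (real^'d::finite)) \<Rightarrow> nat \<Rightarrow> real \<Rightarrow> real \<Rightarrow> (real^'d)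
     \<Rightarrow> nat \<Rightarrow> 'a \<Rightarrow> real" where
  "weight K X T h u x t \<omega> =
     Kh K h (u - real t / real T) * (\<Prod>j\<in>UNIV. Kh K h (x $ j - X T t \<omega> $ j))"

text \<open>The vector (m, h d_u m, h d_{x^1} m, ..., h d_{x^d} m)(u,x), where Dm is the
  (Frechet) derivative of (u,x) \<mapsto> m u x.\<close>
definition mfrak ::
  "(real \<Rightarrow> (real^'d) \<Rightarrow> real) \<Rightarrow> (real \<times> (real^'d) \<Rightarrow> (real \<times> (real^'d)) \<Rightarrow>\<^sub>L real)
     \<Rightarrow> real \<Rightarrow> real \<Rightarrow> (real^'d::finite) \<Rightarrow> real \<times> real \<times> (real^'d)" where
  "mfrak m Dm h u x =
     (m u x, h * blinfun_apply (Dm (u, x)) (1, 0),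
      h *\<^sub>R (\<chi> j. blinfun_apply (Dm (u, x)) (0, axis j 1)))"

text \<open>The random vector (1/T) D^T W (m - D mfrak(u,x)).\<close>
definition bias_vec ::
  "(real \<Rightarrow> real) \<Rightarrow> (real \<Rightarrow> (real^'d) \<Rightarrow> real) \<Rightarrow> (real \<times> (real^'d) \<Rightarrow> (real \<times> (real^'d)) \<Rightarrow>\<^sub>L real)
     \<Rightarrow> (nat \<Rightarrow> nat \<Rightarrow> 'a \<Rightarrow> (real^'d::finite)) \<Rightarrow> nat \<Rightarrow> real \<Rightarrow> real \<Rightarrow> (real^'d)
     \<Rightarrow> 'a \<Rightarrow> real \<times> real \<times> (real^'d)" where
  "bias_vec K m Dm X T h u x \<omega> =
     (1 / real T) *\<^sub>R
       (\<Sum>t\<in>{1..T}. (weight K X T h u x t \<omega> *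
            (m (real t / real T) (X T t \<omega>)
             - inner (design_row X T h u x t \<omega>) (mfrak m Dm h u x)))
          *\<^sub>R design_row X T h u x t \<omega>)"

end

theory Submission
  imports Defs
begin

lemma prod_diff_bound:
  fixes a b :: "'i \<Rightarrow> real"
  assumes "finite A" "\<And>i. i \<in> A \<Longrightarrow> \<bar>a i\<bar> \<le> B" "\<And>i. i \<in> A \<Longrightarrow> \<bar>b i\<bar> \<le> B"
  shows "\<bar>prod a A - prod b A\<bar> \<le> (max B 1) ^ card A * (\<Sum>i\<in>A. \<bar>a i - b i\<bar>)"
  using assms
proof (induction A rule: finite_induct)
  case empty
  then show ?case by simp
next
  case (insert j A)
  let ?B = "max B 1"
  have IH: "\<bar>prod a A - prod b A\<bar> \<le> ?B ^ card A * (\<Sum>i\<in>A. \<bar>a i - b i\<bar>)"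
    using insert by auto
  have aj: "\<bar>a j\<bar> \<le> ?B" using insert by force
  have pb: "\<bar>prod b A\<bar> \<le> ?B ^ card A"
  proof -
    have "\<bar>prod b A\<bar> = (\<Prod>i\<in>A. \<bar>b i\<bar>)" by (simp add: abs_prod)
    also have "\<dots> \<le> (\<Prod>i\<in>A. ?B)"
      by (intro prod_mono) (use insert in force)
    finally show ?thesis by simp
  qed
  have "prod a (insert j A) - prod b (insert j A) = a j * (prod a A - prod b A) + (a j - b j) * prod b A"
    using insert by (simp add: algebra_simps)
  then have "\<bar>prod a (insert j A) - prod b (insert j A)\<bar> \<le> \<bar>a j\<bar> * \<bar>prod a A - prod b A\<bar> + \<bar>a j - b j\<bar> * \<bar>prod b A\<bar>"
    by (metis abs_mult abs_triangle_ineq)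
  also have "\<dots> \<le> ?B * (?B ^ card A * (\<Sum>i\<in>A. \<bar>a i - b i\<bar>)) + \<bar>a j - b j\<bar> * ?B ^ card A"
    by (intro add_mono mult_mono IH aj pb) auto
  also have "\<dots> \<le> ?B ^ card (insert j A) * (\<Sum>i\<in>insert j A. \<bar>a i - b i\<bar>)"
  proof -
    have "?B ^ card A \<le> ?B ^ card (insert j A)"
      using insert by (intro power_increasing) auto
    then have "\<bar>a j - b j\<bar> * ?B ^ card A \<le> \<bar>a j - b j\<bar> * ?B ^ card (insert j A)"
      by (intro mult_left_mono) auto
    then show ?thesis using insert by (simp add: algebra_simps)
  qed
  finally show ?case .
qed

lemma min_one_le_powr:
  fixes z r :: real
  assumes "0 \<le> z" "0 < r" "r \<le> 1"
  shows "min 1 z \<le> z powr r"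
proof (cases "z \<le> 1")
  case True
  then show ?thesis using assms
    using powr_mono'[of r 1 z] by (cases "z = 0") auto
next
  case False
  then show ?thesis using assms by (simp add: ge_one_powr_ge_zero)
qed

lemma card_close:
  fixes u e :: real and T :: nat
  assumes "T > 0" "e \<ge> 0"
  shows "real (card {t\<in>{1..T}. \<bar>u - real t / real T\<bar> \<le> e}) \<le> 2 * e * real T + 1"
proof -
  define a where "a = real T * u - e * real T"
  define b where "b = real T * u + e * real T"
  have sub: "{t\<in>{1..T}. \<bar>u - real t / real T\<bar> \<le> e} \<subseteq> {t. a \<le> real t \<and> real t \<le> b}"
  proof
    fix t assume "t \<in> {t\<in>{1..T}. \<bar>u - real t / real T\<bar> \<le> e}"
    then have "\<bar>real T * u - real t\<bar> \<le> e * real T"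
      using assms by (auto simp: field_simps abs_le_iff)
    then show "t \<in> {t. a \<le> real t \<and> real t \<le> b}" unfolding a_def b_def by (auto simp: abs_le_iff)
  qed
  have cnt: "real (card {t::nat. a \<le> real t \<and> real t \<le> b}) \<le> b - a + 1" if "a \<le> b" for a b :: real
  proof -
    have "{t::nat. a \<le> real t \<and> real t \<le> b} \<subseteq> {nat \<lceil>a\<rceil>..nat \<lfloor>b\<rfloor>}"
      by (auto simp: le_nat_iff ceiling_le_iff le_floor_iff nat_le_iff)
    hence "card {t::nat. a \<le> real t \<and> real t \<le> b} \<le> card {nat \<lceil>a\<rceil>..nat \<lfloor>b\<rfloor>}"
      by (intro card_mono) auto
    also have "\<dots> = nat \<lfloor>b\<rfloor> + 1 - nat \<lceil>a\<rceil>" by simp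
    finally have c: "card {t::nat. a \<le> real t \<and> real t \<le> b} \<le> nat \<lfloor>b\<rfloor> + 1 - nat \<lceil>a\<rceil>" .
    show ?thesis
    proof (cases "b < 0")
      case True
      then have "{t::nat. a \<le> real t \<and> real t \<le> b} = {}" by auto
      then have "card {t::nat. a \<le> real t \<and> real t \<le> b} = 0" by (simp only: card.empty)
      then show ?thesis using that by simp
    next
      case False
      have fb: "real (nat \<lfloor>b\<rfloor>) \<le> b" using False by linarith
      have ca: "a \<le> real (nat \<lceil>a\<rceil>)" by linarith
      have "real (nat \<lfloor>b\<rfloor> + 1 - nat \<lceil>a\<rceil>) \<le> b - a + 1"
      proof (cases "nat \<lceil>a\<rceil> \<le> nat \<lfloor>b\<rfloor> + 1")
        case True
        then have "real (nat \<lfloor>b\<rfloor> + 1 - nat \<lceil>a\<rceil>) = real (nat \<lfloor>b\<rfloor>) + 1 - real (nat \<lceil>a\<rceil>)"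
          by (simp add: of_nat_diff)
        then show ?thesis using fb ca by linarith
      next
        case False
        then have "nat \<lfloor>b\<rfloor> + 1 - nat \<lceil>a\<rceil> = 0" by (meson diff_is_0_eq nle_le)
        then show ?thesis using that by simp
      qed
      then show ?thesis using c by (meson of_nat_le_iff order_trans)
    qed
  qed
  have "card {t\<in>{1..T}. \<bar>u - real t / real T\<bar> \<le> e} \<le> card {t::nat. a \<le> real t \<and> real t \<le> b}"
    apply (intro card_mono sub)
    apply (rule finite_subset[of _ "{0..nat \<lfloor>b\<rfloor>}"])
    apply (auto simp: le_nat_iff le_floor_iff)
    done
  then have "real (card {t\<in>{1..T}. \<bar>u - real t / real T\<bar> \<le> e}) \<le> b - a + 1"
  proof -
    have "a \<le> b" using assms unfolding a_def b_def by simp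
    from cnt[OF this] show ?thesis using \<open>card _ \<le> card _\<close> by (meson of_nat_le_iff order_trans)
  qed
  then show ?thesis unfolding a_def b_def by simp
qed

lemma density_cube_bound:
  fixes Y :: "'a \<Rightarrow> real^'d" and F :: "real^'d \<Rightarrow> real"
  assumes dist: "distributed M lborel Y (\<lambda>y. ennreal (F y))"
    and Fb: "\<And>y. y \<in> cbox (x - e *\<^sub>R One) (x + e *\<^sub>R One) \<Longrightarrow> F y \<le> Fm"
    and Fm: "Fm \<ge> 0" and e: "e \<ge> 0"
  shows "measure M (Y -` cbox (x - e *\<^sub>R One) (x + e *\<^sub>R One) \<inter> space M) \<le> Fm * (2 * e) ^ CARD('d)"
proof -
  let ?A = "cbox (x - e *\<^sub>R One) (x + e *\<^sub>R One)"
  have vol: "emeasure lborel ?A = ennreal ((2 * e) ^ CARD('d))"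
  proof -
    have "emeasure lborel ?A = ennreal (\<Prod>b\<in>Basis. ((x + e *\<^sub>R One) - (x - e *\<^sub>R One)) \<bullet> b)"
      using e by (simp add: emeasure_lborel_cbox_eq inner_diff_left inner_add_left)
    also have "(\<Prod>b\<in>(Basis::(real^'d) set). ((x + e *\<^sub>R One) - (x - e *\<^sub>R One)) \<bullet> b) = (\<Prod>b\<in>(Basis::(real^'d) set). 2 * e)"
    proof (intro prod.cong refl)
      fix b :: "real^'d" assume b: "b \<in> Basis"
      have "(x + e *\<^sub>R One) - (x - e *\<^sub>R One) = (2 * e) *\<^sub>R (One::real^'d)"
        by (simp add: algebra_simps scaleR_2 flip: scaleR_add_left)
      then show "((x + e *\<^sub>R One) - (x - e *\<^sub>R One)) \<bullet> b = 2 * e"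
        using b by (simp only: inner_scaleR_left inner_sum_Basis)
    qed
    also have "\<dots> = (2 * e) ^ CARD('d)" by simp
    finally show ?thesis .
  qed
  have "emeasure M (Y -` ?A \<inter> space M) = (\<integral>\<^sup>+y. ennreal (F y) * indicator ?A y \<partial>lborel)"
    by (rule distributed_emeasure[OF dist]) simp
  also have "\<dots> \<le> (\<integral>\<^sup>+y. ennreal Fm * indicator ?A y \<partial>lborel)"
    by (intro nn_integral_mono) (auto simp: indicator_def Fb ennreal_leI)
  also have "\<dots> = ennreal Fm * emeasure lborel ?A"
    by (rule nn_integral_cmult_indicator) simp
  also have "\<dots> = ennreal (Fm * (2 * e) ^ CARD('d))"
    using Fm e by (simp add: vol ennreal_mult)
  finally have le: "emeasure M (Y -` ?A \<inter> space M) \<le> ennreal (Fm * (2 * e) ^ CARD('d))" .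
  have "measure M (Y -` ?A \<inter> space M) \<le> enn2real (ennreal (Fm * (2 * e) ^ CARD('d)))"
    unfolding measure_def by (rule enn2real_mono[OF le]) simp
  also have "\<dots> = Fm * (2 * e) ^ CARD('d)" using Fm e by simp
  finally show ?thesis .
qed

lemma density_bounded:
  fixes f fu :: "real \<Rightarrow> 'b::euclidean_space \<Rightarrow> real" and fx :: "real \<Rightarrow> 'b \<Rightarrow> 'b"
  assumes du: "\<And>u y. u \<in> {0..1} \<Longrightarrow> ((\<lambda>v. f v y) has_real_derivative fu u y) (at u within {0..1})"
    and dx: "\<And>u y. u \<in> {0..1} \<Longrightarrow> (f u has_derivative (\<lambda>v. inner (fx u y) v)) (at y)"
    and cu: "continuous_on ({0..1} \<times> UNIV) (\<lambda>(u, y). fu u y)"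
    and Kc: "compact Kset"
  shows "\<exists>Fm\<ge>0. \<forall>u\<in>{0..1}. \<forall>y\<in>Kset. f u y \<le> Fm"
proof -
  have "bounded ((\<lambda>(u, y). fu u y) ` ({0..1} \<times> Kset))"
    by (intro compact_imp_bounded compact_continuous_image continuous_on_subset[OF cu] compact_Times Kc compact_Icc) auto
  then obtain Mu where Mu: "\<And>u y. u \<in> {0..1} \<Longrightarrow> y \<in> Kset \<Longrightarrow> \<bar>fu u y\<bar> \<le> Mu"
    unfolding bounded_iff by force
  have "continuous_on Kset (f 0)"
    using dx[of 0] by (intro continuous_at_imp_continuous_on) (auto intro: has_derivative_continuous)
  then have "bounded (f 0 ` Kset)" by (intro compact_imp_bounded compact_continuous_image Kc)
  then obtain M0 where M0: "\<And>y. y \<in> Kset \<Longrightarrow> \<bar>f 0 y\<bar> \<le> M0"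
    unfolding bounded_iff by force
  have main: "f u y \<le> M0 + Mu" if u: "u \<in> {0..1}" and y: "y \<in> Kset" for u y
  proof -
    have "norm ((\<lambda>v. f v y) u - (\<lambda>v. f v y) 0) \<le> Mu * norm (u - 0)"
    proof (rule differentiable_bound[where f'="\<lambda>v. (*) (fu v y)"])
      show "convex {0..1::real}" by simp
      fix v :: real assume v: "v \<in> {0..1}"
      show "((\<lambda>v. f v y) has_derivative (*) (fu v y)) (at v within {0..1})"
        using du[OF v] by (rule has_field_derivative_imp_has_derivative)
      have "onorm ((*) (fu v y)) = \<bar>fu v y\<bar> * onorm (\<lambda>x::real. x)"
        using onorm_scaleR[of "\<lambda>x::real. x" "fu v y"] by (simp add: bounded_linear_ident)
      then show "onorm ((*) (fu v y)) \<le> Mu" using Mu[OF v y] by (simp add: onorm_id)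
    qed (use u in auto)
    then have "\<bar>f u y - f 0 y\<bar> \<le> Mu * u" using u by simp
    moreover have "Mu * u \<le> Mu"
      using u Mu[OF u y] by (intro mult_left_le) auto
    ultimately show ?thesis using M0[OF y] by linarith
  qed
  show ?thesis
    using main by (intro exI[of _ "max 0 (M0 + Mu)"]) force
qed

lemma taylor2:
  fixes g :: "'a::real_normed_vector \<Rightarrow> real" and Dg :: "'a \<Rightarrow> 'a \<Rightarrow>\<^sub>L real"
    and D2g :: "'a \<Rightarrow> 'a \<Rightarrow>\<^sub>L ('a \<Rightarrow>\<^sub>L real)"
  assumes Q: "convex Q"
    and dg: "\<And>q. q \<in> Q \<Longrightarrow> (g has_derivative blinfun_apply (Dg q)) (at q within Q)"
    and d2g: "\<And>q. q \<in> Q \<Longrightarrow> (Dg has_derivative blinfun_apply (D2g q)) (at q within Q)"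
    and bd: "\<And>q. q \<in> Q \<Longrightarrow> norm (D2g q) \<le> M2"
    and p0: "p0 \<in> Q" and p: "p \<in> Q"
  shows "\<bar>g p - g p0 - Dg p0 (p - p0)\<bar> \<le> M2 * (norm (p - p0))\<^sup>2"
proof -
  have D1: "norm (Dg q - Dg p0) \<le> M2 * norm (q - p0)" if "q \<in> Q" for q
    by (rule differentiable_bound[OF Q d2g _ that p0]) (simp_all add: norm_blinfun.rep_eq[symmetric] bd)
  define S where "S = Q \<inter> cball p0 (norm (p - p0))"
  have cS: "convex S" unfolding S_def by (intro convex_Int Q convex_cball)
  have segS: "p0 + t *\<^sub>R (p - p0) \<in> S" if "t \<in> {0..1}" for t
  proof -
    have "p0 + t *\<^sub>R (p - p0) \<in> Q"
      using convexD_alt[OF Q p0 p, of t] that by (simp add: algebra_simps)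
    moreover have "norm (t *\<^sub>R (p - p0)) \<le> norm (p - p0)"
      using that by (auto simp: mult_left_le_one_le)
    ultimately show ?thesis unfolding S_def by (auto simp: dist_norm)
  qed
  have derS: "(g has_derivative blinfun_apply (Dg x)) (at x within S)" if "x \<in> S" for x
    using that unfolding S_def using dg has_derivative_subset by blast
  have M2nn: "M2 \<ge> 0" using bd[OF p0] norm_ge_zero order_trans by blast
  have bdS: "onorm (blinfun_apply (Dg x) - blinfun_apply (Dg p0)) \<le> M2 * norm (p - p0)" if x: "x \<in> S" for x
  proof -
    have "onorm (blinfun_apply (Dg x) - blinfun_apply (Dg p0)) = norm (Dg x - Dg p0)"
      by (simp add: norm_blinfun.rep_eq minus_blinfun.rep_eq fun_diff_def)
    also have "\<dots> \<le> M2 * norm (x - p0)" using D1 x unfolding S_def by auto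
    also have "\<dots> \<le> M2 * norm (p - p0)"
      using M2nn x unfolding S_def by (auto simp: dist_norm norm_minus_commute intro: mult_left_mono)
    finally show ?thesis .
  qed
  have p0S: "p0 \<in> S" using p0 unfolding S_def by auto
  have "norm (g p - g p0 - Dg p0 (p - p0)) \<le> norm (p - p0) * (M2 * norm (p - p0))"
    by (rule differentiable_bound_linearization[where S=S and f'="\<lambda>q. blinfun_apply (Dg q)", OF segS derS bdS p0S])
  then show ?thesis by (simp add: power2_eq_square algebra_simps)
qed

lemma kernel_expect_bound:
  fixes X Y :: "'a \<Rightarrow> real^'d" and U :: "'a \<Rightarrow> real" and K :: "real \<Rightarrow> real"
  assumes P: "prob_space M"
    and Xm[measurable]: "X \<in> borel_measurable M" and Ym[measurable]: "Y \<in> borel_measurable M"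
    and Um[measurable]: "U \<in> borel_measurable M"
    and Km[measurable]: "K \<in> borel_measurable borel"
    and K0: "\<And>v. 0 \<le> K v" and KB: "\<And>v. K v \<le> B"
    and KL: "\<And>v w. \<bar>K v - K w\<bar> \<le> L * \<bar>v - w\<bar>" and L0: "L \<ge> 0"
    and Ks: "\<And>v. \<bar>v\<bar> > c \<Longrightarrow> K v = 0" and c: "c > 0"
    and T: "T > 0" and h: "h > 0"
    and appr: "AE \<omega> in M. norm (X \<omega> - Y \<omega>) \<le> (1 / T) * U \<omega>"
    and Umom: "(\<integral>\<^sup>+\<omega>. ennreal (U \<omega> powr \<rho>) \<partial>M) \<le> ennreal CU"
    and r: "0 < r" "r \<le> 1" "r \<le> \<rho>"
    and dist: "distributed M lborel Y (\<lambda>y. ennreal (F y))"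
    and Fb: "\<And>y. y \<in> cbox (x - (c * h) *\<^sub>R One) (x + (c * h) *\<^sub>R One) \<Longrightarrow> F y \<le> Fm"
    and Fm: "Fm \<ge> 0"
  shows "integral\<^sup>L M (\<lambda>\<omega>. \<Prod>j\<in>UNIV. K ((x $ j - X \<omega> $ j) / h))
     \<le> B ^ CARD('d) * Fm * (2 * c * h) ^ CARD('d)
       + (max B 1 ^ CARD('d) * max 2 (L * CARD('d))) * (1 + max CU 0) / (T * h) powr r"
proof -
  interpret prob_space M by (rule P)
  define d where "d = CARD('d)"
  define B1 where "B1 = max B 1"
  define Cm where "Cm = B1 ^ d * max 2 (L * d)"
  define PX where "PX = (\<lambda>\<omega>. \<Prod>j\<in>UNIV. K ((x $ j - X \<omega> $ j) / h))"
  define PY where "PY = (\<lambda>\<omega>. \<Prod>j\<in>UNIV. K ((x $ j - Y \<omega> $ j) / h))"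
  have B0: "B \<ge> 0" using K0 KB order_trans by blast
  have Xj[measurable]: "(\<lambda>\<omega>. X \<omega> $ j) \<in> borel_measurable M" for j
    by (rule measurable_compose[OF Xm borel_measurable_nth])
  have Yj[measurable]: "(\<lambda>\<omega>. Y \<omega> $ j) \<in> borel_measurable M" for j
    by (rule measurable_compose[OF Ym borel_measurable_nth])
  have PXm[measurable]: "PX \<in> borel_measurable M" unfolding PX_def by measurable
  have PYm[measurable]: "PY \<in> borel_measurable M" unfolding PY_def by measurable
  have Pbd: "\<bar>\<Prod>j\<in>UNIV. K ((x $ j - z $ j) / h)\<bar> \<le> B ^ d" for z :: "real^'d"
  proof -
    have "\<bar>\<Prod>j\<in>UNIV. K ((x $ j - z $ j) / h)\<bar> = (\<Prod>j\<in>UNIV. \<bar>K ((x $ j - z $ j) / h)\<bar>)"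
      by (simp add: abs_prod)
    also have "\<dots> \<le> (\<Prod>j\<in>(UNIV::'d set). B)"
      by (intro prod_mono) (use K0 KB in auto)
    finally show ?thesis by (simp add: d_def)
  qed
  have PXi: "integrable M PX"
    by (intro integrable_const_bound[where B="B ^ d"]) (auto simp: PX_def Pbd)
  have PYi: "integrable M PY"
    by (intro integrable_const_bound[where B="B ^ d"]) (auto simp: PY_def Pbd)
  let ?A = "cbox (x - (c * h) *\<^sub>R One) (x + (c * h) *\<^sub>R One)"
  have PYind: "PY \<omega> \<le> B ^ d * indicator (Y -` ?A \<inter> space M) \<omega>" if \<omega>: "\<omega> \<in> space M" for \<omega>
  proof (cases "Y \<omega> \<in> ?A")
    case True
    then show ?thesis using Pbd[of "Y \<omega>"] \<omega> unfolding PY_def by auto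
  next
    case False
    then obtain j where "\<not> (x $ j - c * h \<le> Y \<omega> $ j \<and> Y \<omega> $ j \<le> x $ j + c * h)"
      by (auto simp: mem_box_cart simp flip: Cart_1)
    then have "\<bar>(x $ j - Y \<omega> $ j) / h\<bar> > c" using h by (auto simp: field_simps abs_if split: if_splits)
    then have "K ((x $ j - Y \<omega> $ j) / h) = 0" by (rule Ks)
    then have "PY \<omega> = 0" unfolding PY_def by (intro prod_zero) auto
    then show ?thesis using B0 by simp
  qed
  have EPY: "integral\<^sup>L M PY \<le> B ^ d * Fm * (2 * c * h) ^ d"
  proof -
    have "integral\<^sup>L M PY \<le> integral\<^sup>L M (\<lambda>\<omega>. B ^ d * indicator (Y -` ?A \<inter> space M) \<omega>)"
    proof (intro integral_mono PYi PYind)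
      have Ase: "Y -` ?A \<inter> space M \<in> sets M" by (rule measurable_sets[OF Ym]) simp
      show "integrable M (\<lambda>\<omega>. B ^ d * indicator (Y -` ?A \<inter> space M) \<omega>)"
        by (intro integrable_mult_right integrable_real_indicator Ase) (simp add: emeasure_finite less_top[symmetric])
    qed
    also have "\<dots> = B ^ d * measure M (Y -` ?A \<inter> space M)"
      by simp
    also have "\<dots> \<le> B ^ d * (Fm * (2 * (c * h)) ^ d)"
      unfolding d_def
      by (intro mult_left_mono density_cube_bound[OF dist Fb Fm]) (use c h B0 in auto)
    finally show ?thesis by (simp add: mult.assoc)
  qed
  have Uae: "AE \<omega> in M. 0 \<le> U \<omega>"
    using appr
  proof eventually_elim
    case (elim \<omega>)
    then have "0 \<le> U \<omega> / T" using norm_ge_zero[of "X \<omega> - Y \<omega>"] by (simp del: norm_ge_zero)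
    then show ?case using T by (simp add: zero_le_divide_iff)
  qed
  have diffpt: "\<bar>PX \<omega> - PY \<omega>\<bar> \<le> Cm / (T * h) powr r * (1 + U \<omega> powr \<rho>)"
    if nX: "norm (X \<omega> - Y \<omega>) \<le> (1 / T) * U \<omega>" and U0: "0 \<le> U \<omega>" for \<omega>
  proof -
    define w where "w = norm (X \<omega> - Y \<omega>) / h"
    define z where "z = U \<omega> / (T * h)"
    have w0: "w \<ge> 0" unfolding w_def using h by simp
    have wz: "w \<le> z" unfolding w_def z_def using nX h T by (simp add: field_simps)
    have z0: "z \<ge> 0" using w0 wz by linarith
    have B1: "B1 \<ge> 1" "B \<le> B1" unfolding B1_def by auto
    have d1: "\<bar>PX \<omega> - PY \<omega>\<bar> \<le> 2 * B1 ^ d"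
    proof -
      have "\<bar>PX \<omega>\<bar> \<le> B1 ^ d" "\<bar>PY \<omega>\<bar> \<le> B1 ^ d"
        unfolding PX_def PY_def using Pbd B0 B1 power_mono order_trans by blast+
      then show ?thesis by linarith
    qed
    have d2: "\<bar>PX \<omega> - PY \<omega>\<bar> \<le> B1 ^ d * (L * d * w)"
    proof -
      have "\<bar>PX \<omega> - PY \<omega>\<bar> \<le> B1 ^ card (UNIV::'d set) * (\<Sum>j\<in>UNIV. \<bar>K ((x $ j - X \<omega> $ j) / h) - K ((x $ j - Y \<omega> $ j) / h)\<bar>)"
        unfolding PX_def PY_def B1_def
        by (rule prod_diff_bound) (use K0 KB in auto)
      also have "\<dots> \<le> B1 ^ d * (\<Sum>j\<in>(UNIV::'d set). L * w)"
      proof (unfold d_def, intro mult_left_mono sum_mono)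
        fix j :: 'd
        have "\<bar>K ((x $ j - X \<omega> $ j) / h) - K ((x $ j - Y \<omega> $ j) / h)\<bar> \<le> L * \<bar>(x $ j - X \<omega> $ j) / h - (x $ j - Y \<omega> $ j) / h\<bar>"
          by (rule KL)
        also have "\<bar>(x $ j - X \<omega> $ j) / h - (x $ j - Y \<omega> $ j) / h\<bar> = \<bar>(X \<omega> - Y \<omega>) $ j\<bar> / h"
        proof -
          have "(x $ j - X \<omega> $ j) / h - (x $ j - Y \<omega> $ j) / h = - ((X \<omega> - Y \<omega>) $ j / h)"
            by (simp add: diff_divide_distrib)
          then show ?thesis using h by simp
        qed
        also have "\<dots> \<le> w" unfolding w_def using h by (intro divide_right_mono component_le_norm_cart) auto
        finally show "\<bar>K ((x $ j - X \<omega> $ j) / h) - K ((x $ j - Y \<omega> $ j) / h)\<bar> \<le> L * w"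
          using L0 by (simp add: mult_left_mono order_trans)
      qed (use B1 in \<open>auto simp: d_def\<close>)
      finally show ?thesis by (simp add: d_def mult_ac)
    qed
    have "\<bar>PX \<omega> - PY \<omega>\<bar> \<le> Cm * min 1 w"
    proof (cases "w \<le> 1")
      case True
      have "B1 ^ d * (L * d * w) \<le> B1 ^ d * (max 2 (L * d) * w)"
        using w0 B1 by (intro mult_left_mono mult_right_mono) auto
      then show ?thesis using d2 True unfolding Cm_def by (simp add: mult_ac)
    next
      case False
      have "2 * B1 ^ d \<le> B1 ^ d * max 2 (L * d)"
        using B1 by (simp add: mult_ac)
      then show ?thesis using d1 False unfolding Cm_def by simp
    qed
    also have "\<dots> \<le> Cm * z powr r"
    proof -
      have "min 1 w \<le> min 1 z" using wz by simp
      also have "\<dots> \<le> z powr r" using min_one_le_powr[OF z0 r(1,2)] .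
      finally show ?thesis unfolding Cm_def using B1 by (intro mult_left_mono) auto
    qed
    also have "z powr r = U \<omega> powr r / (T * h) powr r"
      unfolding z_def using U0 T h by (simp add: powr_divide)
    also have "U \<omega> powr r \<le> 1 + U \<omega> powr \<rho>"
    proof (cases "U \<omega> \<le> 1")
      case True
      then have "U \<omega> powr r \<le> 1" using U0 r by (intro powr_le1) auto
      then show ?thesis using powr_ge_zero[of "U \<omega>" \<rho>] by linarith
    next
      case False
      then have "U \<omega> powr r \<le> U \<omega> powr \<rho>" using r by (intro powr_mono) auto
      then show ?thesis by linarith
    qed
    then have "Cm * (U \<omega> powr r / (T * h) powr r) \<le> Cm * ((1 + U \<omega> powr \<rho>) / (T * h) powr r)"
      unfolding Cm_def using T h B1
      by (intro mult_left_mono divide_right_mono) auto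
    finally show ?thesis by (simp add: field_simps)
  qed
  define cst where "cst = Cm / (T * h) powr r"
  have cst0: "cst \<ge> 0" unfolding cst_def Cm_def B1_def by auto
  have "(\<integral>\<^sup>+\<omega>. ennreal \<bar>PX \<omega> - PY \<omega>\<bar> \<partial>M) \<le> (\<integral>\<^sup>+\<omega>. ennreal cst * (1 + ennreal (U \<omega> powr \<rho>)) \<partial>M)"
  proof (rule nn_integral_mono_AE)
    show "AE \<omega> in M. ennreal \<bar>PX \<omega> - PY \<omega>\<bar> \<le> ennreal cst * (1 + ennreal (U \<omega> powr \<rho>))"
      using appr Uae
    proof eventually_elim
      case (elim \<omega>)
      have "ennreal \<bar>PX \<omega> - PY \<omega>\<bar> \<le> ennreal (cst * (1 + U \<omega> powr \<rho>))"
        using diffpt[OF elim] unfolding cst_def by (rule ennreal_leI)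
      also have "\<dots> = ennreal cst * (1 + ennreal (U \<omega> powr \<rho>))"
        using cst0 by (simp add: ennreal_mult ennreal_plus)
      finally show ?case .
    qed
  qed
  also have "\<dots> = ennreal cst * ((\<integral>\<^sup>+\<omega>. 1 \<partial>M) + (\<integral>\<^sup>+\<omega>. ennreal (U \<omega> powr \<rho>) \<partial>M))"
    by (subst nn_integral_cmult) (auto simp: nn_integral_add)
  also have "\<dots> \<le> ennreal cst * (1 + ennreal CU)"
    using Umom by (intro mult_left_mono add_mono) (auto simp: emeasure_space_1)
  also have "\<dots> = ennreal (cst * (1 + max CU 0))"
    using cst0 by (simp add: ennreal_mult ennreal_plus[symmetric] max_def ennreal_eq_0_iff ennreal_neg)
  finally have nnb: "(\<integral>\<^sup>+\<omega>. ennreal \<bar>PX \<omega> - PY \<omega>\<bar> \<partial>M) \<le> ennreal (cst * (1 + max CU 0))" .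
  have Ediff: "integral\<^sup>L M (\<lambda>\<omega>. \<bar>PX \<omega> - PY \<omega>\<bar>) \<le> cst * (1 + max CU 0)"
  proof -
    have "integral\<^sup>L M (\<lambda>\<omega>. \<bar>PX \<omega> - PY \<omega>\<bar>) = enn2real (\<integral>\<^sup>+\<omega>. ennreal \<bar>PX \<omega> - PY \<omega>\<bar> \<partial>M)"
      by (rule integral_eq_nn_integral) auto
    also have "\<dots> \<le> enn2real (ennreal (cst * (1 + max CU 0)))"
      by (rule enn2real_mono[OF nnb]) simp
    also have "\<dots> = cst * (1 + max CU 0)" using cst0 by simp
    finally show ?thesis .
  qed
  have "integral\<^sup>L M PX = integral\<^sup>L M PY + integral\<^sup>L M (\<lambda>\<omega>. PX \<omega> - PY \<omega>)"
    using PXi PYi by simp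
  also have "integral\<^sup>L M (\<lambda>\<omega>. PX \<omega> - PY \<omega>) \<le> integral\<^sup>L M (\<lambda>\<omega>. \<bar>PX \<omega> - PY \<omega>\<bar>)"
    using PXi PYi by (intro integral_mono) auto
  finally have "integral\<^sup>L M PX \<le> B ^ d * Fm * (2 * c * h) ^ d + cst * (1 + max CU 0)"
    using EPY Ediff by linarith
  then show ?thesis unfolding PX_def cst_def Cm_def B1_def d_def by (simp add: field_simps)
qed

lemma inner_row_mfrak:
  fixes D :: "(real \<times> (real^'d)) \<Rightarrow>\<^sub>L real" and v :: "real^'d"
  assumes h: "h \<noteq> 0"
  shows "inner (1::real, a / h, (1 / h) *\<^sub>R v) (m0, h * D (1, 0), h *\<^sub>R (\<chi> j. D (0, axis j 1)))
         = m0 + D (a, v)"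
proof -
  have lin: "bounded_linear (\<lambda>w::real^'d. D (0, w))"
    by (intro bounded_linear_compose[OF blinfun.bounded_linear_right] bounded_linear_Pair bounded_linear_zero bounded_linear_ident)
  have "D (0, v) = D (0, \<Sum>j\<in>UNIV. v $ j *\<^sub>R axis j 1)"
    using basis_expansion[of v] by (simp add: scalar_mult_eq_scaleR)
  also have "\<dots> = (\<Sum>j\<in>UNIV. v $ j * D (0, axis j 1))"
    using linear_sum[OF bounded_linear.linear[OF lin], of "\<lambda>j. v $ j *\<^sub>R axis j 1" UNIV]
      linear_scale[OF bounded_linear.linear[OF lin]]
    by simp
  finally have D0: "D (0, v) = (\<Sum>j\<in>UNIV. v $ j * D (0, axis j 1))" .
  have "D (a, v) = D (a *\<^sub>R (1, 0) + (0, v))" by simp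
  also have "\<dots> = a * D (1, 0) + D (0, v)"
    by (simp only: blinfun.add_right blinfun.scaleR_right) simp
  finally have Dav: "D (a, v) = a * D (1, 0) + D (0, v)" .
  have "inner ((1 / h) *\<^sub>R v) (h *\<^sub>R (\<chi> j. D (0, axis j 1))) = inner v (\<chi> j. D (0, axis j 1))"
    using h by simp
  also have "\<dots> = (\<Sum>j\<in>UNIV. v $ j * D (0, axis j 1))" by (simp add: inner_vec_def)
  finally have I: "inner ((1 / h) *\<^sub>R v) (h *\<^sub>R (\<chi> j. D (0, axis j 1))) = D (0, v)" using D0 by simp
  show ?thesis using h I Dav by simp
qed

lemma summand_bound:
  fixes X :: "nat \<Rightarrow> nat \<Rightarrow> 'a \<Rightarrow> real^'d" and m :: "real \<Rightarrow> real^'d \<Rightarrow> real"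
    and Dm :: "real \<times> (real^'d) \<Rightarrow> (real \<times> (real^'d)) \<Rightarrow>\<^sub>L real"
    and D2m :: "real \<times> (real^'d) \<Rightarrow> (real \<times> (real^'d)) \<Rightarrow>\<^sub>L ((real \<times> (real^'d)) \<Rightarrow>\<^sub>L real)"
    and K :: "real \<Rightarrow> real"
  assumes K0: "\<And>v. 0 \<le> K v" and Ks: "\<And>v. \<bar>v\<bar> > c \<Longrightarrow> K v = 0" and c: "c > 0"
    and hh: "hh > 0"
    and Qdef: "Q = {0..1} \<times> cball 0 (R + 1)"
    and dm: "\<And>p. p \<in> Q \<Longrightarrow> ((\<lambda>(u, y). m u y) has_derivative blinfun_apply (Dm p)) (at p within Q)"
    and d2m: "\<And>p. p \<in> Q \<Longrightarrow> (Dm has_derivative blinfun_apply (D2m p)) (at p within Q)"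
    and M2: "\<And>p. p \<in> Q \<Longrightarrow> norm (D2m p) \<le> M2"
    and u: "u \<in> {0..1}" and x: "norm x \<le> R" and small: "real CARD('d) * c * hh \<le> 1"
    and t: "t \<in> {1..T}"
  shows "norm ((weight K X T hh u x t \<omega> * (m (real t / real T) (X T t \<omega>)
              - inner (design_row X T hh u x t \<omega>) (mfrak m Dm hh u x))) *\<^sub>R design_row X T hh u x t \<omega>)
     \<le> (M2 * (1 + (real CARD('d))\<^sup>2) * c\<^sup>2 * (1 + c + real CARD('d) * c)) * hh\<^sup>2 * weight K X T hh u x t \<omega>"
proof -
  define d where "d = real CARD('d)"
  define W where "W = weight K X T hh u x t \<omega>"
  define z where "z = X T t \<omega>"
  define s where "s = real t / real T"
  have W0: "W \<ge> 0" unfolding W_def weight_def Kh_def using hh K0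
    by (intro mult_nonneg_nonneg prod_nonneg divide_nonneg_nonneg) auto
  show ?thesis
  proof (cases "W = 0")
    case True
    then show ?thesis unfolding W_def by simp
  next
    case False
    have KhK: "Kh K hh v \<noteq> 0 \<Longrightarrow> \<bar>v\<bar> \<le> c * hh" for v
    proof -
      assume "Kh K hh v \<noteq> 0"
      then have "K (v / hh) \<noteq> 0" unfolding Kh_def by auto
      then have "\<bar>v / hh\<bar> \<le> c" by (metis Ks not_le)
      then have "\<bar>v\<bar> / hh \<le> c" using hh by (simp add: abs_divide)
      then show "\<bar>v\<bar> \<le> c * hh" using hh by (simp add: pos_divide_le_eq)
    qed
    from False have "Kh K hh (u - s) \<noteq> 0" "\<And>j. Kh K hh (x $ j - z $ j) \<noteq> 0"
      unfolding W_def weight_def s_def z_def by auto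
    then have su: "\<bar>s - u\<bar> \<le> c * hh" and zx: "\<And>j. \<bar>(z - x) $ j\<bar> \<le> c * hh"
      using KhK by (fastforce simp: abs_minus_commute)+
    have nzx: "norm (z - x) \<le> d * (c * hh)"
    proof -
      have "norm (z - x) \<le> (\<Sum>j\<in>UNIV. \<bar>(z - x) $ j\<bar>)" by (rule norm_le_l1_cart)
      also have "\<dots> \<le> (\<Sum>j\<in>(UNIV::'d set). c * hh)" by (intro sum_mono zx)
      finally show ?thesis by (simp add: d_def)
    qed
    have T1: "T \<ge> 1" "t \<ge> 1" "t \<le> T" using t by auto
    have s01: "s \<in> {0..1}" unfolding s_def using T1 by auto
    have "norm z \<le> norm x + norm (z - x)" by (metis add.commute diff_add_cancel norm_triangle_ineq)
    also have "\<dots> \<le> R + 1" using x nzx small by (simp add: d_def mult_ac)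
    finally have pQ: "(s, z) \<in> Q" unfolding Qdef using s01 by auto
    have R0: "R \<ge> 0" using x norm_ge_zero order_trans by blast
    have p0Q: "(u, x) \<in> Q" unfolding Qdef using u x by auto
    have inn: "inner (design_row X T hh u x t \<omega>) (mfrak m Dm hh u x) = m u x + Dm (u, x) (s - u, z - x)"
      unfolding design_row_def mfrak_def s_def z_def using hh by (intro inner_row_mfrak) auto
    have tay: "\<bar>(\<lambda>(u, y). m u y) (s, z) - (\<lambda>(u, y). m u y) (u, x) - Dm (u, x) ((s, z) - (u, x))\<bar>
        \<le> M2 * (norm ((s, z) - (u, x)))\<^sup>2"
      by (rule taylor2[of Q, OF _ dm d2m M2 p0Q pQ]) (simp add: Qdef convex_Times)
    have rem: "\<bar>m s z - inner (design_row X T hh u x t \<omega>) (mfrak m Dm hh u x)\<bar> \<le> M2 * ((1 + d\<^sup>2) * c\<^sup>2 * hh\<^sup>2)"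
    proof -
      have M20: "M2 \<ge> 0" using M2[OF p0Q] norm_ge_zero order_trans by blast
      have "(norm ((s, z) - (u, x)))\<^sup>2 = (s - u)\<^sup>2 + (norm (z - x))\<^sup>2"
        by (simp add: norm_Pair)
      also have "\<dots> \<le> (c * hh)\<^sup>2 + (d * (c * hh))\<^sup>2"
        using power_mono[OF su abs_ge_zero, of 2] power_mono[OF nzx norm_ge_zero, of 2]
        by (intro add_mono) auto
      also have "\<dots> = (1 + d\<^sup>2) * c\<^sup>2 * hh\<^sup>2" by (simp add: power_mult_distrib algebra_simps)
      finally have "(norm ((s, z) - (u, x)))\<^sup>2 \<le> (1 + d\<^sup>2) * c\<^sup>2 * hh\<^sup>2" .
      then have "M2 * (norm ((s, z) - (u, x)))\<^sup>2 \<le> M2 * ((1 + d\<^sup>2) * c\<^sup>2 * hh\<^sup>2)" using M20 by (rule mult_left_mono)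
      then show ?thesis using tay inn by simp
    qed
    have row: "norm (design_row X T hh u x t \<omega>) \<le> 1 + c + d * c"
    proof -
      have "norm (design_row X T hh u x t \<omega>) \<le> norm (1::real) + norm ((s - u) / hh, (1 / hh) *\<^sub>R (z - x))"
        unfolding design_row_def s_def z_def by (rule norm_Pair_le)
      also have "\<dots> \<le> 1 + (norm ((s - u) / hh) + norm ((1 / hh) *\<^sub>R (z - x)))"
        using norm_Pair_le[of "(s - u) / hh" "(1 / hh) *\<^sub>R (z - x)"] by (simp only: add_left_mono norm_one)
      also have "norm ((s - u) / hh) \<le> c"
      proof -
        have "norm ((s - u) / hh) = \<bar>s - u\<bar> / hh" using hh by (simp add: abs_divide)
        also have "\<dots> \<le> c" using su hh by (simp add: pos_divide_le_eq)
        finally show ?thesis .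
      qed
      also have "norm ((1 / hh) *\<^sub>R (z - x)) \<le> d * c"
        using nzx hh by (simp add: pos_divide_le_eq mult_ac)
      finally show ?thesis by simp
    qed
    have "norm ((W * (m s z - inner (design_row X T hh u x t \<omega>) (mfrak m Dm hh u x))) *\<^sub>R design_row X T hh u x t \<omega>)
        = W * \<bar>m s z - inner (design_row X T hh u x t \<omega>) (mfrak m Dm hh u x)\<bar> * norm (design_row X T hh u x t \<omega>)"
      using W0 by (simp add: abs_mult)
    also have "\<dots> \<le> W * (M2 * ((1 + d\<^sup>2) * c\<^sup>2 * hh\<^sup>2)) * (1 + c + d * c)"
      using W0 rem row by (intro mult_mono mult_left_mono) auto
    finally show ?thesis unfolding W_def s_def z_def d_def by (simp add: mult_ac)
  qed
qed

theorem mainTheorem3: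
  fixes M :: "'a measure"
    and X :: "nat \<Rightarrow> nat \<Rightarrow> 'a \<Rightarrow> (real^'d::finite)"
    and Xu :: "real \<Rightarrow> int \<Rightarrow> 'a \<Rightarrow> (real^'d)"
    and U :: "nat \<Rightarrow> nat \<Rightarrow> real \<Rightarrow> 'a \<Rightarrow> real"
    and CU \<rho> :: real
    and f :: "real \<Rightarrow> (real^'d) \<Rightarrow> real"
    and fu :: "real \<Rightarrow> (real^'d) \<Rightarrow> real"
    and fx :: "real \<Rightarrow> (real^'d) \<Rightarrow> (real^'d)"
    and A \<beta> :: real
    and m :: "real \<Rightarrow> (real^'d) \<Rightarrow> real"
    and Dm :: "real \<times> (real^'d) \<Rightarrow> (real \<times> (real^'d)) \<Rightarrow>\<^sub>L real"
    and D2m :: "real \<times> (real^'d) \<Rightarrow> (real \<times> (real^'d)) \<Rightarrow>\<^sub>L ((real \<times> (real^'d)) \<Rightarrow>\<^sub>L real)"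
    and K :: "real \<Rightarrow> real"
    and C1 :: real
    and S :: "(real^'d) set"
    and h :: "nat \<Rightarrow> real"
  assumes prob: "prob_space M"
    and X_meas: "\<And>T t. X T t \<in> borel_measurable M"
    \<comment> \<open>(C1) local stationarity\<close>
    and rho_pos: "\<rho> > 0"
    and C1_stat: "\<And>u. u \<in> {0..1} \<Longrightarrow> strictly_stationary M (Xu u)"
    and C1_approx: "\<And>T t u. u \<in> {0..1} \<Longrightarrow> t \<in> {1..T} \<Longrightarrow>
        AE \<omega> in M. norm (X T t \<omega> - Xu u (int t) \<omega>)
                     \<le> (\<bar>real t / real T - u\<bar> + 1 / real T) * U T t u \<omega>"
    and U_meas: "\<And>T t u. U T t u \<in> borel_measurable M"
    and U_moment: "\<And>T t u. u \<in> {0..1} \<Longrightarrow> t \<in> {1..T} \<Longrightarrow>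
        (\<integral>\<^sup>+\<omega>. ennreal (U T t u \<omega> powr \<rho>) \<partial>M) \<le> ennreal CU"
    \<comment> \<open>(C2) density with continuous partial derivatives\<close>
    and C2_density: "\<And>u t. u \<in> {0..1} \<Longrightarrow>
        distributed M lborel (Xu u t) (\<lambda>y. ennreal (f u y))"
    and C2_du: "\<And>u y. u \<in> {0..1} \<Longrightarrow>
        ((\<lambda>v. f v y) has_real_derivative fu u y) (at u within {0..1})"
    and C2_dx: "\<And>u y. u \<in> {0..1} \<Longrightarrow>
        (f u has_derivative (\<lambda>v. inner (fx u y) v)) (at y)"
    and C2_cont_u: "continuous_on ({0..1} \<times> UNIV) (\<lambda>(u, y). fu u y)"
    and C2_cont_x: "continuous_on ({0..1} \<times> UNIV) (\<lambda>(u, y). fx u y)"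
    \<comment> \<open>(C3) strong mixing\<close>
    and C3: "\<And>k. k \<ge> 1 \<Longrightarrow> alpha_mixing M X k \<le> A * real k powr (- \<beta>)"
    \<comment> \<open>(C4) m twice continuously differentiable in (u,x)\<close>
    and C4_d1: "\<And>p. p \<in> {0..1} \<times> UNIV \<Longrightarrow>
        ((\<lambda>(u, y). m u y) has_derivative blinfun_apply (Dm p)) (at p within {0..1} \<times> UNIV)"
    and C4_d2: "\<And>p. p \<in> {0..1} \<times> UNIV \<Longrightarrow>
        (Dm has_derivative blinfun_apply (D2m p)) (at p within {0..1} \<times> UNIV)"
    and C4_cont: "continuous_on ({0..1} \<times> UNIV) D2m"
    \<comment> \<open>(C5) kernel\<close>
    and K_nonneg: "\<And>v. K v \<ge> 0"
    and K_symm: "\<And>v. K (- v) = K v"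
    and K_bdd: "bounded (range K)"
    and K_lip: "\<exists>L. L-lipschitz_on UNIV K"
    and K_supp: "\<And>v. \<bar>v\<bar> > C1 \<Longrightarrow> K v = 0"
    \<comment> \<open>S compact and (CS)\<close>
    and S_compact: "compact S"
    and CS: "\<exists>cS>0. \<forall>x\<in>S. ereal cS \<le> Liminf (at_right 0)
        (\<lambda>b. ereal (measure lborel (S \<inter> box (x - (C1 * b) *\<^sub>R One) (x + (C1 * b) *\<^sub>R One))
                     / b ^ CARD('d)))"
    \<comment> \<open>bandwidth\<close>
    and h_pos: "\<And>T. h T > 0"
    and h_lim: "h \<longlonglongrightarrow> 0"
    and h_rate1: "(\<lambda>T. 1 / (real T powr (min \<rho> 1) * h T powr (real CARD('d) + min \<rho> 1)))
                  \<longlonglongrightarrow> 0"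
    and h_rate2: "filterlim (\<lambda>T. real T * h T ^ (CARD('d) + 1)) at_top sequentially"
  shows "\<exists>C. eventually (\<lambda>T. \<forall>u\<in>{0..1}. \<forall>x\<in>S.
            norm (integral\<^sup>L M (bias_vec K m Dm X T (h T) u x))
            \<le> C * (1 / (real T powr (min \<rho> 1) * h T powr (real CARD('d) - 1)) + (h T)\<^sup>2))
          sequentially"
proof -
  interpret prob_space M by (rule prob)
  define r where "r = min \<rho> 1"
  have r: "0 < r" "r \<le> 1" "r \<le> \<rho>" unfolding r_def using rho_pos by auto
  obtain B where KB: "\<And>v. K v \<le> B"
    using K_bdd unfolding bounded_iff by (metis rangeI real_norm_def abs_le_D1)
  have B0: "B \<ge> 0" using K_nonneg KB order_trans by blast
  obtain L where L: "L-lipschitz_on UNIV K" using K_lip by blast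
  have L0: "L \<ge> 0" using L by (simp add: lipschitz_on_def)
  have KL: "\<And>v w. \<bar>K v - K w\<bar> \<le> L * \<bar>v - w\<bar>"
    using L by (simp add: lipschitz_on_def dist_real_def)
  have Km: "K \<in> borel_measurable borel"
    by (rule borel_measurable_continuous_onI[OF lipschitz_on_continuous_on[OF L]])
  define c where "c = max C1 1"
  have c: "c > 0" unfolding c_def by simp
  have Ks: "\<And>v. \<bar>v\<bar> > c \<Longrightarrow> K v = 0" using K_supp unfolding c_def by simp
  obtain R where R: "\<And>x. x \<in> S \<Longrightarrow> norm x \<le> R"
    using compact_imp_bounded[OF S_compact] unfolding bounded_iff by blast
  define Q where "Q = {0..1::real} \<times> cball (0::real^'d) (R + 1)"
  have Qsub: "Q \<subseteq> {0..1} \<times> UNIV" unfolding Q_def by auto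
  have cQ: "compact Q" unfolding Q_def by (intro compact_Times compact_Icc compact_cball)
  have "bounded (D2m ` Q)"
    by (intro compact_imp_bounded compact_continuous_image continuous_on_subset[OF C4_cont Qsub] cQ)
  then obtain M2' where M2': "\<And>p. p \<in> Q \<Longrightarrow> norm (D2m p) \<le> M2'"
    unfolding bounded_iff by blast
  define M2 where "M2 = max M2' 0"
  have M2: "\<And>p. p \<in> Q \<Longrightarrow> norm (D2m p) \<le> M2" unfolding M2_def using M2' by force
  have M20: "M2 \<ge> 0" unfolding M2_def by simp
  have dm: "\<And>p. p \<in> Q \<Longrightarrow> ((\<lambda>(u, y). m u y) has_derivative blinfun_apply (Dm p)) (at p within Q)"
    using C4_d1 Qsub by (meson has_derivative_subset subsetD)
  have d2m: "\<And>p. p \<in> Q \<Longrightarrow> (Dm has_derivative blinfun_apply (D2m p)) (at p within Q)"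
    using C4_d2 Qsub by (meson has_derivative_subset subsetD)
  obtain Fm where Fm0: "Fm \<ge> 0" and Fm: "\<And>u y. u \<in> {0..1} \<Longrightarrow> y \<in> cball 0 (R + 1) \<Longrightarrow> f u y \<le> Fm"
    using density_bounded[OF C2_du C2_dx C2_cont_u compact_cball[of "0::real^'d" "R + 1"]] by blast
  define Cerr where "Cerr = (max B 1 ^ CARD('d) * max 2 (L * real CARD('d))) * (1 + max CU 0)"
  define Cw where "Cw = B ^ CARD('d) * Fm * (2 * c) ^ CARD('d) + 1"
  define Ct where "Ct = M2 * (1 + (real CARD('d))\<^sup>2) * c\<^sup>2 * (1 + c + real CARD('d) * c)"
  define Ksum where "Ksum = 2 * c * B + B"
  define C where "C = Ct * Cw * Ksum"
  have Cerr0: "Cerr \<ge> 0" unfolding Cerr_def using L0 by auto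
  have Cw0: "Cw \<ge> 0" unfolding Cw_def using B0 Fm0 c by auto
  have Ct0: "Ct \<ge> 0" unfolding Ct_def using M20 c by auto
  have Ksum0: "Ksum \<ge> 0" unfolding Ksum_def using B0 c by auto
  have C0: "C \<ge> 0" unfolding C_def using Ct0 Cw0 Ksum0 by auto
  have ev1: "eventually (\<lambda>T. real CARD('d) * c * h T \<le> 1 \<and> h T \<le> 1) sequentially"
  proof -
    have e: "1 / (real CARD('d) * c + 1) > 0" using c by (simp add: add_pos_nonneg)
    have "eventually (\<lambda>T. h T < 1 / (real CARD('d) * c + 1)) sequentially"
      using order_tendstoD(2)[OF h_lim e] .
    then show ?thesis
    proof eventually_elim
      case (elim T)
      have hp: "h T > 0" by (rule h_pos)
      have "(real CARD('d) * c + 1) * h T < 1" using elim c by (simp add: field_simps add_pos_nonneg)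
      moreover have "c * h T * real CARD('d) \<ge> 0" using hp c by simp
      ultimately show ?case using hp by (simp add: algebra_simps)
    qed
  qed
  have ev2: "eventually (\<lambda>T. 1 \<le> real T * h T ^ (CARD('d) + 1)) sequentially"
    using h_rate2 unfolding filterlim_at_top by blast
  have ev3: "eventually (\<lambda>T. Cerr * (1 / (real T powr r * h T powr (real CARD('d) + r))) < 1) sequentially"
  proof -
    have "(\<lambda>T. Cerr * (1 / (real T powr r * h T powr (real CARD('d) + r)))) \<longlonglongrightarrow> Cerr * 0"
      using h_rate1 unfolding r_def by (intro tendsto_mult tendsto_const)
    then show ?thesis by (intro order_tendstoD(2)) auto
  qed
  have ev4: "eventually (\<lambda>T. T \<ge> 1) sequentially" by (rule eventually_ge_at_top)
  show ?thesis
  proof (intro exI[of _ C], rule eventually_mono[OF eventually_conj[OF ev1 eventually_conj[OF ev2 eventually_conj[OF ev3 ev4]]]], intro ballI)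
    fix T :: nat and u :: real and x :: "real^'d"
    assume evs: "(real CARD('d) * c * h T \<le> 1 \<and> h T \<le> 1) \<and> 1 \<le> real T * h T ^ (CARD('d) + 1) \<and>
       Cerr * (1 / (real T powr r * h T powr (real CARD('d) + r))) < 1 \<and> 1 \<le> T"
      and u: "u \<in> {0..1}" and x: "x \<in> S"
    define hh where "hh = h T"
    have hh: "hh > 0" unfolding hh_def by (rule h_pos)
    have T1: "T \<ge> 1" using evs by auto
    have Tpos: "real T > 0" using T1 by simp
    have small: "real CARD('d) * c * hh \<le> 1" and hh1: "hh \<le> 1" using evs unfolding hh_def by auto
    have Thh: "real T * hh \<ge> 1"
    proof -
      have "hh ^ (CARD('d) + 1) = hh * hh ^ CARD('d)" by simp
      also have "\<dots> \<le> hh * 1" using hh hh1 by (intro mult_left_mono power_le_one) auto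
      finally have "real T * hh ^ (CARD('d) + 1) \<le> real T * hh" by (intro mult_left_mono) auto
      then show ?thesis using evs unfolding hh_def by linarith
    qed
    have err: "Cerr / ((real T * hh) powr r * hh ^ CARD('d)) \<le> 1"
    proof -
      have "(real T * hh) powr r * hh ^ CARD('d) = real T powr r * hh powr (real CARD('d) + r)"
        using Tpos hh by (simp add: powr_mult powr_add powr_realpow)
      then show ?thesis using evs unfolding hh_def by simp
    qed
    have xR: "norm x \<le> R" using R x .
    note Km[measurable]
    define P where "P t \<omega> = (\<Prod>j\<in>UNIV. K ((x $ j - X T t \<omega> $ j) / hh))" for t \<omega>
    have Xj[measurable]: "(\<lambda>\<omega>. X T t \<omega> $ j) \<in> borel_measurable M" for t j
      by (rule measurable_compose[OF X_meas borel_measurable_nth])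
    have Pm[measurable]: "P t \<in> borel_measurable M" for t unfolding P_def by measurable
    have Pbd: "\<bar>P t \<omega>\<bar> \<le> B ^ CARD('d)" for t \<omega>
    proof -
      have "\<bar>P t \<omega>\<bar> = (\<Prod>j\<in>UNIV. \<bar>K ((x $ j - X T t \<omega> $ j) / hh)\<bar>)"
        unfolding P_def by (simp add: abs_prod)
      also have "\<dots> \<le> (\<Prod>j\<in>(UNIV::'d set). B)"
        by (intro prod_mono) (use K_nonneg KB in auto)
      finally show ?thesis by simp
    qed
    have Pint: "integrable M (P t)" for t
      by (intro integrable_const_bound[where B="B ^ CARD('d)"]) (auto simp: Pbd)
    have wform: "weight K X T hh u x t = (\<lambda>\<omega>. Kh K hh (u - real t / real T) * (P t \<omega> / hh ^ CARD('d)))" for t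
      unfolding weight_def P_def Kh_def by (auto simp: prod_dividef)
    have wint: "integrable M (weight K X T hh u x t)" for t
      unfolding wform using Pint by auto
    have Kh0: "Kh K hh v \<ge> 0" for v unfolding Kh_def using K_nonneg hh by auto
    have Ew: "integral\<^sup>L M (weight K X T hh u x t) \<le> Kh K hh (u - real t / real T) * Cw" if t: "t \<in> {1..T}" for t
    proof -
      define s where "s = real t / real T"
      have s01: "s \<in> {0..1}" using t by (auto simp: s_def)
      have Ym: "Xu s (int t) \<in> borel_measurable M"
        using distributed_measurable[OF C2_density[OF s01]] by simp
      have appr: "AE \<omega> in M. norm (X T t \<omega> - Xu s (int t) \<omega>) \<le> (1 / real T) * U T t s \<omega>"
        using C1_approx[OF s01 t] unfolding s_def by simp
      have Fb: "f s y \<le> Fm" if y: "y \<in> cbox (x - (c * hh) *\<^sub>R One) (x + (c * hh) *\<^sub>R One)" for y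
      proof -
        have "\<bar>(y - x) $ j\<bar> \<le> c * hh" for j
        proof -
          have "x $ j - c * hh \<le> y $ j \<and> y $ j \<le> x $ j + c * hh"
            using y by (auto simp: mem_box_cart simp flip: Cart_1)
          then show ?thesis by (simp add: abs_le_iff)
        qed
        then have "norm (y - x) \<le> (\<Sum>j\<in>(UNIV::'d set). c * hh)"
          by (intro order_trans[OF norm_le_l1_cart] sum_mono) auto
        also have "\<dots> \<le> 1" using small by (simp add: mult_ac)
        finally have "norm y \<le> R + 1" using xR norm_triangle_ineq[of x "y - x"] by simp
        then show ?thesis using Fm[OF s01] by simp
      qed
      have EP: "integral\<^sup>L M (P t) \<le> B ^ CARD('d) * Fm * (2 * c * hh) ^ CARD('d) + Cerr / (real T * hh) powr r"
        unfolding P_def Cerr_def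
        by (rule kernel_expect_bound[OF prob X_meas Ym U_meas Km K_nonneg KB KL L0 Ks c Tpos hh appr
              U_moment[OF s01 t] r C2_density[OF s01] Fb Fm0])
      have hd: "hh ^ CARD('d) > 0" using hh by simp
      have "integral\<^sup>L M (P t) / hh ^ CARD('d) \<le> (B ^ CARD('d) * Fm * (2 * c * hh) ^ CARD('d) + Cerr / (real T * hh) powr r) / hh ^ CARD('d)"
        using EP hd by (intro divide_right_mono) auto
      also have "\<dots> = B ^ CARD('d) * Fm * (2 * c) ^ CARD('d) + Cerr / ((real T * hh) powr r * hh ^ CARD('d))"
        using hd hh by (simp add: power_mult_distrib add_divide_distrib)
      also have "\<dots> \<le> Cw" unfolding Cw_def using err by simp
      finally have "integral\<^sup>L M (P t) / hh ^ CARD('d) \<le> Cw" .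
      then have "Kh K hh (u - s) * (integral\<^sup>L M (P t) / hh ^ CARD('d)) \<le> Kh K hh (u - s) * Cw"
        using Kh0 by (intro mult_left_mono) auto
      then show ?thesis unfolding wform s_def by simp
    qed
    have Ksum_bd: "(\<Sum>t\<in>{1..T}. Kh K hh (u - real t / real T)) \<le> real T * Ksum"
    proof -
      have kb: "Kh K hh (u - real t / real T) \<le> (if \<bar>u - real t / real T\<bar> \<le> c * hh then B / hh else 0)" for t
      proof (cases "\<bar>u - real t / real T\<bar> \<le> c * hh")
        case True
        then show ?thesis unfolding Kh_def using KB hh by (simp add: divide_right_mono)
      next
        case False
        then have "\<bar>(u - real t / real T) / hh\<bar> > c" using hh by (simp add: abs_divide pos_less_divide_eq mult_ac)
        then show ?thesis using False Ks unfolding Kh_def by simp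
      qed
      have "(\<Sum>t\<in>{1..T}. Kh K hh (u - real t / real T))
          \<le> (\<Sum>t\<in>{1..T}. if \<bar>u - real t / real T\<bar> \<le> c * hh then B / hh else 0)"
        by (intro sum_mono kb)
      also have "\<dots> = real (card {t\<in>{1..T}. \<bar>u - real t / real T\<bar> \<le> c * hh}) * (B / hh)"
        by (simp add: sum.inter_filter[symmetric])
      also have "\<dots> \<le> (2 * (c * hh) * real T + 1) * (B / hh)"
        using B0 hh c T1 by (intro mult_right_mono card_close) auto
      also have "\<dots> = 2 * c * B * real T + B / hh" using hh by (simp add: field_simps)
      also have "B / hh \<le> B * real T"
      proof -
        have "1 / hh \<le> real T" using Thh hh by (simp add: field_simps)
        then show ?thesis using B0 by (metis mult_left_mono times_divide_eq_right mult_1_right)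
      qed
      finally show ?thesis unfolding Ksum_def by (simp add: algebra_simps)
    qed
    have pt: "norm (bias_vec K m Dm X T hh u x \<omega>)
        \<le> (1 / real T) * (\<Sum>t\<in>{1..T}. Ct * hh\<^sup>2 * weight K X T hh u x t \<omega>)" for \<omega>
    proof -
      have "norm (bias_vec K m Dm X T hh u x \<omega>) = (1 / real T) * norm (\<Sum>t\<in>{1..T}. (weight K X T hh u x t \<omega> *
            (m (real t / real T) (X T t \<omega>) - inner (design_row X T hh u x t \<omega>) (mfrak m Dm hh u x)))
          *\<^sub>R design_row X T hh u x t \<omega>)"
        unfolding bias_vec_def using Tpos by simp
      also have "\<dots> \<le> (1 / real T) * (\<Sum>t\<in>{1..T}. norm ((weight K X T hh u x t \<omega> *
            (m (real t / real T) (X T t \<omega>) - inner (design_row X T hh u x t \<omega>) (mfrak m Dm hh u x)))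
          *\<^sub>R design_row X T hh u x t \<omega>))"
        using Tpos by (intro mult_left_mono norm_sum) auto
      also have "\<dots> \<le> (1 / real T) * (\<Sum>t\<in>{1..T}. Ct * hh\<^sup>2 * weight K X T hh u x t \<omega>)"
        using Tpos unfolding Ct_def
        by (intro mult_left_mono sum_mono summand_bound[OF K_nonneg Ks c hh Q_def dm d2m M2 u xR small]) auto
      finally show ?thesis .
    qed
    have main: "norm (integral\<^sup>L M (bias_vec K m Dm X T hh u x)) \<le> C * hh\<^sup>2"
    proof (cases "integrable M (bias_vec K m Dm X T hh u x)")
      case False
      then show ?thesis using C0 by (simp add: not_integrable_integral_eq)
    next
      case True
      have "norm (integral\<^sup>L M (bias_vec K m Dm X T hh u x)) \<le> integral\<^sup>L M (\<lambda>\<omega>. norm (bias_vec K m Dm X T hh u x \<omega>))"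
        by (rule integral_norm_bound)
      also have "\<dots> \<le> integral\<^sup>L M (\<lambda>\<omega>. (1 / real T) * (\<Sum>t\<in>{1..T}. Ct * hh\<^sup>2 * weight K X T hh u x t \<omega>))"
        using True wint pt by (intro integral_mono integrable_norm integrable_mult_right integrable_sum) auto
      also have "\<dots> = (1 / real T) * (\<Sum>t\<in>{1..T}. Ct * hh\<^sup>2 * integral\<^sup>L M (weight K X T hh u x t))"
        using wint by (simp add: integral_sum integrable_mult_right)
      also have "\<dots> \<le> (1 / real T) * (\<Sum>t\<in>{1..T}. Ct * hh\<^sup>2 * (Kh K hh (u - real t / real T) * Cw))"
        using Tpos Ct0 Ew by (intro mult_left_mono sum_mono) auto
      also have "\<dots> = (Ct * hh\<^sup>2 * Cw / real T) * (\<Sum>t\<in>{1..T}. Kh K hh (u - real t / real T))"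
        by (simp add: sum_distrib_left mult_ac)
      also have "\<dots> \<le> (Ct * hh\<^sup>2 * Cw / real T) * (real T * Ksum)"
        using Ksum_bd Ct0 Cw0 Tpos by (intro mult_left_mono) auto
      also have "\<dots> = C * hh\<^sup>2" unfolding C_def using Tpos by (simp add: field_simps)
      finally show ?thesis .
    qed
    have first0: "1 / (real T powr (min \<rho> 1) * h T powr (real CARD('d) - 1)) \<ge> 0" by simp
    have "C * hh\<^sup>2 \<le> C * (1 / (real T powr (min \<rho> 1) * h T powr (real CARD('d) - 1)) + hh\<^sup>2)"
      using C0 first0 by (intro mult_left_mono) auto
    then show "norm (integral\<^sup>L M (bias_vec K m Dm X T (h T) u x))
            \<le> C * (1 / (real T powr (min \<rho> 1) * h T powr (real CARD('d) - 1)) + (h T)\<^sup>2)"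
      using main unfolding hh_def by simp
  qed
qed

end
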